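(* Let $G=(V,E)$ be an undirected simple graph, let $k\ge 2$ be an integer and $v\in V$. Let $m_v$ be the number of edges of the ego-network $G_{N(v)}$. Then $$score(v)\le \min\Big\{\Big\lfloor \frac{d(v)}{k}\Big\rfloor,\ \Big\lfloor\frac{2m_v}{k(k-1)}\Big\rfloor\Big\}.$$
   Context: $N(v)$ is the neighbor set of $v$, $d(v)=|N(v)|$, and $G_{N(v)}$ is the subgraph of $G$ induced by $N(v)$. For an integer $k\ge 2$, the $k$-truss of a graph $H$ is the subgraph formed by the largest edge set $F\subseteq E(H)$ such that every edge of $F$ lies in at least $k-2$ triangles all of whose edges are in $F$ (its vertices are those incident to edges of $F$). $score(v)$ is the number of connected components of the $k$-truss of $G_{N(v)}$. *)

theory Defs
  imports Main
begin

definition simple_graph :: "'a set \<Rightarrow> 'a set set \<Rightarrow> bool" where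
  "simple_graph V E \<longleftrightarrow> finite V \<and>
     (\<forall>e\<in>E. \<exists>x y. x \<noteq> y \<and> x \<in> V \<and> y \<in> V \<and> e = {x, y})"

definition nbrs :: "'a set set \<Rightarrow> 'a \<Rightarrow> 'a set" where
  "nbrs E v = {u. {u, v} \<in> E}"

definition degree :: "'a set set \<Rightarrow> 'a \<Rightarrow> nat" where
  "degree E v = card (nbrs E v)"

definition induced_edges :: "'a set set \<Rightarrow> 'a set \<Rightarrow> 'a set set" where
  "induced_edges E S = {e \<in> E. e \<subseteq> S}"

definition truss_ok :: "nat \<Rightarrow> 'a set set \<Rightarrow> bool" where
  "truss_ok k F \<longleftrightarrow>
     (\<forall>x y. {x, y} \<in> F \<longrightarrow> card {w. {x, w} \<in> F \<and> {y, w} \<in> F} \<ge> k - 2)"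

definition truss_edges :: "nat \<Rightarrow> 'a set set \<Rightarrow> 'a set set" where
  "truss_edges k EH = (GREATEST F. F \<subseteq> EH \<and> truss_ok k F)"

(* number of connected components of the graph formed by edge set F,
   whose vertices are those incident to edges of F *)
definition num_components :: "'a set set \<Rightarrow> nat" where
  "num_components F =
     card ((\<Union>F) // {(x, y). x \<in> \<Union>F \<and> y \<in> \<Union>F \<and>
                          (x, y) \<in> {(a, b). {a, b} \<in> F}\<^sup>*})"

definition score :: "nat \<Rightarrow> 'a set set \<Rightarrow> 'a \<Rightarrow> nat" where
  "score k E v = num_components (truss_edges k (induced_edges E (nbrs E v)))"

end

theory Submission
  imports Defs
begin

lemma pairs_sub: "{(x, y). {x, y} = {a, b}} \<subseteq> {(a, b), (b, a)}"
  by (auto simp: doubleton_eq_iff)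

lemma pairs_fin: "finite {(x, y). {x, y} = {a, b}}"
  by (rule finite_subset[OF pairs_sub]) simp

lemma pairs_card: "card {(x, y). {x, y} = {a, b}} \<le> 2"
proof -
  have "card {(x, y). {x, y} = {a, b}} \<le> card {(a, b), (b, a)}" by (rule card_mono[OF _ pairs_sub]) simp
  also have "\<dots> \<le> 2" by (simp add: card_insert_le_m1)
  finally show ?thesis .
qed

lemma truss_union:
  assumes fin: "finite EH" and fe: "\<forall>e\<in>EH. finite e"
  shows "truss_ok k (\<Union>{F. F \<subseteq> EH \<and> truss_ok k F})" (is "truss_ok k ?U")
  unfolding truss_ok_def[of k ?U]
proof (intro allI impI)
  fix x y
  assume "{x, y} \<in> ?U"
  then obtain F where F: "F \<subseteq> EH" "truss_ok k F" "{x,y} \<in> F" by blast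
  have "k - 2 \<le> card {w. {x, w} \<in> F \<and> {y, w} \<in> F}" using F(2,3) unfolding truss_ok_def by blast
  also have "\<dots> \<le> card {w. {x, w} \<in> ?U \<and> {y, w} \<in> ?U}"
  proof (rule card_mono)
    have "{w. {x, w} \<in> ?U \<and> {y, w} \<in> ?U} \<subseteq> \<Union>EH" by blast
    moreover have "finite (\<Union>EH)" using fin fe by blast
    ultimately show "finite {w. {x, w} \<in> ?U \<and> {y, w} \<in> ?U}" by (rule finite_subset)
    show "{w. {x, w} \<in> F \<and> {y, w} \<in> F} \<subseteq> {w. {x, w} \<in> ?U \<and> {y, w} \<in> ?U}" using F by blast
  qed
  finally show "k - 2 \<le> card {w. {x, w} \<in> ?U \<and> {y, w} \<in> ?U}" .
qed

lemma truss_edges_props: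
  assumes fin: "finite EH" and fe: "\<forall>e\<in>EH. finite e"
  shows "truss_edges k EH \<subseteq> EH \<and> truss_ok k (truss_edges k EH)"
proof -
  let ?U = "\<Union>{F. F \<subseteq> EH \<and> truss_ok k F}"
  have "truss_edges k EH = ?U"
    unfolding truss_edges_def
    apply (rule Greatest_equality)
    using truss_union[OF fin fe, of k] by auto
  then show ?thesis using truss_union[OF fin fe, of k] by auto
qed

lemma comp_bounds:
  fixes F :: "'a set set"
  assumes fin: "finite F" and two: "\<forall>e\<in>F. \<exists>a b. a \<noteq> b \<and> e = {a, b}"
    and ok: "truss_ok k F" and k2: "k \<ge> 2"
  shows "num_components F * k \<le> card (\<Union>F) \<and> num_components F * (k * (k - 1)) \<le> 2 * card F"
proof -
  define W where "W = \<Union>F"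
  define R where "R = {(x, y). x \<in> W \<and> y \<in> W \<and> (x, y) \<in> {(a, b). {a, b} \<in> F}\<^sup>*}"
  have nc: "num_components F = card (W // R)" unfolding num_components_def W_def R_def by simp
  have finW: "finite W" unfolding W_def using fin two by fastforce
  have noloop: "{x, x} \<notin> F" for x using two by (metis insert_absorb2 doubleton_eq_iff)
  have symR': "sym {(a, b). {a, b} \<in> F}" by (auto simp: sym_def insert_commute)
  have eqv: "equiv W R"
    unfolding equiv_def refl_on_def sym_def trans_def R_def
    using sym_rtrancl[OF symR'] by (auto simp: sym_def intro: rtrancl_trans)
  have finQ: "finite (W // R)" by (rule finite_quotient[OF finW]) (auto simp: R_def)
  have stepC: "w \<in> C" if "C \<in> W // R" "u \<in> C" "{u, w} \<in> F" for C u w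
  proof -
    have "u \<in> W" "w \<in> W" using that unfolding W_def by blast+
    then have "(u, w) \<in> R" unfolding R_def using that(3) by auto
    then show ?thesis using in_quotient_imp_closed[OF eqv that(1,2)] by blast
  qed
  have CW: "C \<subseteq> W" if "C \<in> W // R" for C using that Union_quotient[OF eqv] by blast
  have cn: "{w. {x, w} \<in> F \<and> {y, w} \<in> F} \<subseteq> W" for x y unfolding W_def by blast
  have other: "\<exists>y. {u, y} \<in> F" if uW: "u \<in> W" for u
  proof -
    obtain e where e: "e \<in> F" "u \<in> e" using uW unfolding W_def by blast
    obtain a b where ab: "e = {a, b}" using two e(1) by blast
    show ?thesis using e ab by (auto simp: insert_commute)
  qed
  have nbW: "{w. {u, w} \<in> F} \<subseteq> W" for u unfolding W_def by blast
  have deg: "k - 1 \<le> card {w. {u, w} \<in> F}" if uW: "u \<in> W" for u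
  proof -
    obtain y where y: "{u, y} \<in> F" using other[OF uW] by blast
    have "k - 2 \<le> card {w. {u, w} \<in> F \<and> {y, w} \<in> F}" using ok y unfolding truss_ok_def by blast
    moreover have "y \<notin> {w. {u, w} \<in> F \<and> {y, w} \<in> F}" using noloop by blast
    moreover have "finite {w. {u, w} \<in> F \<and> {y, w} \<in> F}" using finite_subset[OF cn finW] .
    ultimately have "k - 1 \<le> card (insert y {w. {u, w} \<in> F \<and> {y, w} \<in> F})" using k2 by simp
    also have "\<dots> \<le> card {w. {u, w} \<in> F}"
      apply (rule card_mono)
       apply (rule finite_subset[OF _ finW]) unfolding W_def using y apply blast
      using y by blast
    finally show ?thesis .
  qed
  have sizeC: "k \<le> card C" if C: "C \<in> W // R" for C
  proof -
    obtain u where u: "u \<in> C" using in_quotient_imp_non_empty[OF eqv C] by blast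
    have "u \<in> W" using CW[OF C] u by blast
    then obtain y where y: "{u, y} \<in> F" using other by blast
    let ?S = "{w. {u, w} \<in> F \<and> {y, w} \<in> F}"
    have "k - 2 \<le> card ?S" using ok y unfolding truss_ok_def by blast
    moreover have "y \<notin> ?S" "u \<notin> ?S" using noloop by blast+
    moreover have "u \<noteq> y" using y noloop by blast
    moreover have "finite ?S" using finite_subset[OF cn finW] .
    ultimately have "k \<le> card (insert u (insert y ?S))" using k2 by simp
    also have "\<dots> \<le> card C"
      apply (rule card_mono)
       apply (rule finite_subset[OF CW[OF C] finW])
      using u stepC[OF C u y] stepC[OF C u] by blast
    finally show ?thesis .
  qed
  have part1: "card (W // R) * k \<le> card W"
  proof -
    have "card (W // R) * k \<le> sum card (W // R)" using sizeC sum_bounded_below[of "W // R" k card] by simp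
    also have "sum card (W // R) = card (\<Union>(W // R))"
      apply (rule card_Union_disjoint[symmetric])
      using quotient_disj[OF eqv] unfolding pairwise_def disjnt_def apply blast
      using CW finW finite_subset by blast
    also have "\<Union>(W // R) = W" using Union_quotient[OF eqv] .
    finally show ?thesis .
  qed
  define EC where "EC C = {e \<in> F. e \<subseteq> C}" for C
  have edgesC: "k * (k - 1) \<le> 2 * card (EC C)" if C: "C \<in> W // R" for C
  proof -
    define D where "D = Sigma C (\<lambda>u. {w. {u, w} \<in> F})"
    have finC: "finite C" using finite_subset[OF CW[OF C] finW] .
    have "card D = (\<Sum>u\<in>C. card {w. {u, w} \<in> F})"
      unfolding D_def by (rule card_SigmaI[OF finC]) (use finite_subset[OF nbW finW] in blast)
    also have "\<dots> \<ge> card C * (k - 1)"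
    proof -
      have "\<And>i. i \<in> C \<Longrightarrow> k - 1 \<le> card {w. {i, w} \<in> F}" using deg CW[OF C] by blast
      then have "of_nat (card C) * (k - 1) \<le> (\<Sum>u\<in>C. card {w. {u, w} \<in> F})" by (rule sum_bounded_below)
      then show ?thesis by simp
    qed
    finally have "card C * (k - 1) \<le> card D" .
    moreover have "k * (k - 1) \<le> card C * (k - 1)" using sizeC[OF C] by simp
    moreover have "card D \<le> 2 * card (EC C)"
    proof -
      have DU: "D \<subseteq> (\<Union>e\<in>EC C. {(a, b). {a, b} = e})"
        unfolding D_def EC_def using stepC[OF C] by blast
      have finEC: "finite (EC C)" unfolding EC_def using fin by simp
      have c2: "card {(a, b). {a, b} = e} \<le> 2" if eC: "e \<in> EC C" for e
      proof -
        have "e \<in> F" using eC unfolding EC_def by simp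
        then obtain a b where "e = {a, b}" using two by blast
        then show ?thesis using pairs_card by simp
      qed
      have finP: "finite {(a, b). {a, b} = e}" if eC: "e \<in> EC C" for e
      proof -
        have "e \<in> F" using eC unfolding EC_def by simp
        then obtain a b where "e = {a, b}" using two by blast
        then show ?thesis using pairs_fin by simp
      qed
      have "card D \<le> card (\<Union>e\<in>EC C. {(a, b). {a, b} = e})"
        by (rule card_mono[OF _ DU]) (use finEC finP in blast)
      also have "\<dots> \<le> (\<Sum>e\<in>EC C. card {(a, b). {a, b} = e})" by (rule card_UN_le[OF finEC])
      also have "\<dots> \<le> (\<Sum>e\<in>EC C. 2)" by (rule sum_mono) (use c2 in blast)
      finally show ?thesis by simp
    qed
    ultimately show ?thesis by linarith
  qed
  have part2: "card (W // R) * (k * (k - 1)) \<le> 2 * card F"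
  proof -
    have "card (W // R) * (k * (k - 1)) \<le> (\<Sum>C\<in>W // R. 2 * card (EC C))"
      using edgesC sum_bounded_below[of "W // R" "k * (k - 1)" "\<lambda>C. 2 * card (EC C)"] by simp
    also have "\<dots> = 2 * (\<Sum>C\<in>W // R. card (EC C))" by (simp add: sum_distrib_left)
    also have "(\<Sum>C\<in>W // R. card (EC C)) = card (\<Union>C\<in>W // R. EC C)"
    proof (rule card_UN_disjoint[symmetric, OF finQ])
      show "\<forall>i\<in>W // R. finite (EC i)" unfolding EC_def using fin by simp
      show "\<forall>i\<in>W // R. \<forall>j\<in>W // R. i \<noteq> j \<longrightarrow> EC i \<inter> EC j = {}"
      proof (intro ballI impI)
        fix i j assume ij: "i \<in> W // R" "j \<in> W // R" "i \<noteq> j"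
        show "EC i \<inter> EC j = {}"
        proof (rule ccontr)
          assume "EC i \<inter> EC j \<noteq> {}"
          then obtain e where e: "e \<in> F" "e \<subseteq> i" "e \<subseteq> j" unfolding EC_def by blast
          then obtain a b where "e = {a, b}" using two by blast
          then have "a \<in> i" "a \<in> j" using e by auto
          then show False using quotient_disj[OF eqv ij(1,2)] ij(3) by blast
        qed
      qed
    qed
    also have "card (\<Union>C\<in>W // R. EC C) \<le> card F"
      by (rule card_mono[OF fin]) (auto simp: EC_def)
    finally show ?thesis by simp
  qed
  show ?thesis using part1 part2 nc W_def by simp
qed

theorem lemma2:
  fixes V :: "'a set" and E :: "'a set set" and k :: nat and v :: 'a
  assumes "simple_graph V E" and "k \<ge> 2" and "v \<in> V"
  shows "score k E v \<le> min (degree E v div k)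
           ((2 * card (induced_edges E (nbrs E v))) div (k * (k - 1)))"
proof -
  have finV: "finite V" and two: "\<forall>e\<in>E. \<exists>x y. x \<noteq> y \<and> x \<in> V \<and> y \<in> V \<and> e = {x, y}"
    using assms(1) unfolding simple_graph_def by auto
  have EP: "E \<subseteq> Pow V"
  proof
    fix e assume "e \<in> E"
    then obtain x y where "x \<in> V" "y \<in> V" "e = {x, y}" using two by blast
    then show "e \<in> Pow V" by simp
  qed
  have finE: "finite E" using finite_subset[OF EP] finV by simp
  let ?N = "nbrs E v"
  let ?EH = "induced_edges E ?N"
  have finN: "finite ?N" 
    by (rule finite_subset[OF _ finV]) (unfold nbrs_def, use EP in blast)
  have EHE: "?EH \<subseteq> E" unfolding induced_edges_def by blast
  have finEH: "finite ?EH" using finite_subset[OF EHE finE] .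
  have fe: "\<forall>e\<in>?EH. finite e" using EHE EP finV finite_subset by blast
  let ?T = "truss_edges k ?EH"
  have T: "?T \<subseteq> ?EH" "truss_ok k ?T" using truss_edges_props[OF finEH fe] by auto
  have finT: "finite ?T" using finite_subset[OF T(1) finEH] .
  have twoT: "\<forall>e\<in>?T. \<exists>a b. a \<noteq> b \<and> e = {a, b}" using T(1) EHE two by (meson subsetD)
  have cb: "score k E v * k \<le> card (\<Union>?T) \<and> score k E v * (k * (k - 1)) \<le> 2 * card ?T"
    unfolding score_def using comp_bounds[OF finT twoT T(2) assms(2)] .
  have "\<Union>?T \<subseteq> ?N" using T(1) unfolding induced_edges_def by blast
  then have "card (\<Union>?T) \<le> degree E v" unfolding degree_def by (rule card_mono[OF finN])
  then have a: "score k E v * k \<le> degree E v" using cb by linarith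
  have "card ?T \<le> card ?EH" by (rule card_mono[OF finEH T(1)])
  then have b: "score k E v * (k * (k - 1)) \<le> 2 * card ?EH" using cb by linarith
  have kp: "k > 0" "k * (k - 1) > 0" using assms(2) by auto
  show ?thesis using a b kp by (simp add: less_eq_div_iff_mult_less_eq)
qed

end
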